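(* Let $X_i$ be a nonnegative random variable with survival function $\overline{F}_i(x) = \mathbb{P}(X_i > x)$, and for $\theta \in (0,1)$ define $$t_i(\theta) := \sup\{ t \geq 0 : \theta \, \overline{F}_i(x) \leq \overline{F}_i(x/\theta) \text{ for all } x \in [0,t) \}.$$ Then $t_i(\theta) > 0$ for every $\theta \in (0,1)$. *)

theory Defs
  imports "HOL-Probability.Probability"
begin

definition survival :: "'a measure \<Rightarrow> ('a \<Rightarrow> real) \<Rightarrow> real \<Rightarrow> real" where
  "survival M X x = measure M {\<omega> \<in> space M. X \<omega> > x}"

text \<open>t(theta) as a supremum in the extended reals (it may be infinite).\<close>
definition t_theta :: "'a measure \<Rightarrow> ('a \<Rightarrow> real) \<Rightarrow> real \<Rightarrow> ereal" where
  "t_theta M X \<theta> = Sup {ereal t | t. t \<ge> 0 \<and>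
      (\<forall>x\<in>{0..<t}. \<theta> * survival M X x \<le> survival M X (x / \<theta>))}"

end

theory Submission
  imports Defs
begin

theorem lemma12:
  fixes M :: "'a measure" and X :: "'a \<Rightarrow> real" and \<theta> :: real
  assumes "prob_space M"
    and "X \<in> borel_measurable M"
    and "AE \<omega> in M. X \<omega> \<ge> 0"
    and "0 < \<theta>" and "\<theta> < 1"
  shows "t_theta M X \<theta> > 0"
proof -
  interpret prob_space M by fact
  define A where "A = (\<lambda>n::nat. {\<omega> \<in> space M. X \<omega> > 1 / real (Suc n)})"
  have meas: "\<And>x. {\<omega> \<in> space M. X \<omega> > x} \<in> sets M"
    using assms(2) by simp
  have Asets: "range A \<subseteq> sets M" unfolding A_def using meas by auto
  have inc: "incseq A"
  proof (rule incseq_SucI)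
    fix n
    have "1 / real (Suc (Suc n)) \<le> 1 / real (Suc n)"
      by (simp add: frac_le)
    then show "A n \<subseteq> A (Suc n)" unfolding A_def by auto
  qed
  have U: "(\<Union>i. A i) = {\<omega> \<in> space M. X \<omega> > 0}"
  proof safe
    fix \<omega> assume "\<omega> \<in> space M" "X \<omega> > 0"
    then obtain n where "1 / real (Suc n) < X \<omega>"
      using reals_Archimedean[of "X \<omega>"] by (metis inverse_eq_divide)
    then show "\<omega> \<in> (\<Union>i. A i)" using \<open>\<omega> \<in> space M\<close> unfolding A_def by auto
  next
    fix \<omega> i assume "\<omega> \<in> A i"
    then have "\<omega> \<in> space M" "1 / real (Suc i) < X \<omega>" unfolding A_def by auto
    moreover have "0 < 1 / real (Suc i)" by simp
    ultimately show "\<omega> \<in> space M" "0 < X \<omega>" by linarith+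
  qed
  have lim: "(\<lambda>i. measure M (A i)) \<longlonglongrightarrow> survival M X 0"
    using finite_Lim_measure_incseq[OF Asets inc] U unfolding survival_def by simp
  obtain n where n: "\<theta> * survival M X 0 \<le> measure M (A n)"
  proof (cases "survival M X 0 = 0")
    case True then show ?thesis using that[of 0] by simp
  next
    case False
    then have "survival M X 0 > 0" unfolding survival_def
      by (simp add: zero_less_measure_iff)
    then have "\<theta> * survival M X 0 < survival M X 0" using assms(5) by simp
    then have "eventually (\<lambda>i. \<theta> * survival M X 0 < measure M (A i)) sequentially"
      using lim order_tendstoD(1) by blast
    then show ?thesis using that by (metis eventually_sequentially order.refl less_imp_le)
  qed
  define t where "t = \<theta> / real (Suc n)"
  have tpos: "t > 0" unfolding t_def using assms(4) by simp
  have good: "\<forall>x\<in>{0..<t}. \<theta> * survival M X x \<le> survival M X (x / \<theta>)"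
  proof
    fix x assume x: "x \<in> {0..<t}"
    have "x / \<theta> < 1 / real (Suc n)" using x assms(4) unfolding t_def
      by (simp add: divide_simps mult.commute)
    then have "A n \<subseteq> {\<omega> \<in> space M. X \<omega> > x / \<theta>}" unfolding A_def by auto
    then have "measure M (A n) \<le> survival M X (x / \<theta>)" unfolding survival_def
      using meas by (intro finite_measure_mono) auto
    moreover have "survival M X x \<le> survival M X 0" unfolding survival_def
      using x meas by (intro finite_measure_mono) auto
    then have "\<theta> * survival M X x \<le> \<theta> * survival M X 0" using assms(4) by simp
    ultimately show "\<theta> * survival M X x \<le> survival M X (x / \<theta>)" using n by linarith
  qed
  have "ereal t \<le> t_theta M X \<theta>" unfolding t_theta_def
    using tpos good by (intro Sup_upper) auto
  then show ?thesis using tpos by (meson ereal_less(2) less_le_trans)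
qed

end
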